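(* GTDS is co-recursively-enumerable, i.e., the set of GTDS instances that have no solution is recursively enumerable.
   Context: An instance of GTDS consists of a rational discount factor $0<\lambda<1$, a rational target $t$, and rational weights $a_1,\dots,a_k$ ($k\in\mathbb N$); a solution is an infinite sequence $w\in\{a_1,\dots,a_k\}^\omega$ with $\sum_{i=0}^\infty w(i)\lambda^i=t$. *)

theory Defs
  imports Complex_Main "HOL-Library.Nat_Bijection"
begin

datatype recf =
    Zero
  | Succ
  | Proj nat
  | Comp recf "recf list"
  | PrimRec recf recf
  | Minim recf

inductive eval :: "recf \<Rightarrow> nat list \<Rightarrow> nat \<Rightarrow> bool" where
  zero: "eval Zero xs 0"
| succ: "eval Succ (x # xs) (Suc x)"
| proj: "i < length xs \<Longrightarrow> eval (Proj i) xs (xs ! i)"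
| comp: "length ys = length gs \<Longrightarrow> (\<forall>i < length gs. eval (gs ! i) xs (ys ! i))
          \<Longrightarrow> eval f ys z \<Longrightarrow> eval (Comp f gs) xs z"
| pr0: "eval f xs y \<Longrightarrow> eval (PrimRec f g) (0 # xs) y"
| prS: "eval (PrimRec f g) (n # xs) y \<Longrightarrow> eval g (y # n # xs) z
          \<Longrightarrow> eval (PrimRec f g) (Suc n # xs) z"
| mn: "eval f (n # xs) 0 \<Longrightarrow> (\<forall>m < n. \<exists>y. eval f (m # xs) (Suc y))
          \<Longrightarrow> eval (Minim f) xs n"

definition rec_enum :: "nat set \<Rightarrow> bool" where
  "rec_enum A \<longleftrightarrow> (\<exists>f. \<forall>n. n \<in> A \<longleftrightarrow> (\<exists>y. eval f [n] y))"

definition encode_rat :: "rat \<Rightarrow> nat" where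
  "encode_rat q = prod_encode (int_encode (fst (quotient_of q)), nat (snd (quotient_of q)))"

definition encode_instance :: "rat \<Rightarrow> rat \<Rightarrow> rat list \<Rightarrow> nat" where
  "encode_instance lam t ws =
     prod_encode (encode_rat lam, prod_encode (encode_rat t, list_encode (map encode_rat ws)))"

definition gtds_instance :: "rat \<Rightarrow> bool" where
  "gtds_instance lam \<longleftrightarrow> 0 < lam \<and> lam < 1"

definition gtds_solution :: "rat \<Rightarrow> rat \<Rightarrow> rat list \<Rightarrow> (nat \<Rightarrow> rat) \<Rightarrow> bool" where
  "gtds_solution lam t ws w \<longleftrightarrow>
     (\<forall>i. w i \<in> set ws) \<and>
     (\<lambda>i. real_of_rat (w i) * real_of_rat lam ^ i) sums real_of_rat t"

definition gtds_solvable :: "rat \<Rightarrow> rat \<Rightarrow> rat list \<Rightarrow> bool" where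
  "gtds_solvable lam t ws \<longleftrightarrow> (\<exists>w. gtds_solution lam t ws w)"

end

theory Submission
  imports Defs
begin


inductive_cases ZeroE: "eval Zero xs y"
inductive_cases SuccE: "eval Succ xs y"
inductive_cases ProjE: "eval (Proj i) xs y"
inductive_cases CompE: "eval (Comp f gs) xs y"
inductive_cases PrimRecE: "eval (PrimRec f g) xs y"
inductive_cases MinimE: "eval (Minim f) xs y"

lemma eval_det: "eval f xs y \<Longrightarrow> eval f xs y' \<Longrightarrow> y = y'"
proof (induction arbitrary: y' rule: eval.induct)
  case (zero xs) then show ?case by (auto elim: ZeroE)
next
  case (succ x xs) then show ?case by (auto elim: SuccE)
next
  case (proj i xs) then show ?case by (auto elim: ProjE)
next
  case (comp ys gs xs f z)
  from comp.prems obtain ys' where a: "length ys' = length gs"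
    "\<forall>i<length gs. eval (gs ! i) xs (ys' ! i)" "eval f ys' y'"
    by (auto elim: CompE)
  have "ys = ys'" using comp a(1,2) by (fastforce intro!: nth_equalityI)
  then show ?case using comp.IH a(3) by auto
next
  case (pr0 f xs y g)
  from pr0.prems have "eval f xs y'" by (auto elim: PrimRecE)
  then show ?case using pr0.IH by auto
next
  case (prS f g n xs y z)
  from prS.prems obtain y1 where "eval (PrimRec f g) (n # xs) y1" "eval g (y1 # n # xs) y'"
    by (auto elim: PrimRecE)
  then show ?case using prS.IH by auto
next
  case (mn f n xs)
  from mn.prems have b: "eval f (y' # xs) 0" "\<forall>m<y'. \<exists>y. eval f (m # xs) (Suc y)"
    by (auto elim: MinimE)
  show ?case
  proof (rule ccontr)
    assume "n \<noteq> y'"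
    then consider "n < y'" | "y' < n" by linarith
    then show False
    proof cases
      case 1 then obtain z where "eval f (n # xs) (Suc z)" using b by auto
      then show False using mn.IH(1) by fastforce
    next
      case 2 then obtain z where "eval f (y' # xs) (Suc z)" "\<forall>u. eval f (y' # xs) u \<longrightarrow> Suc z = u"
        using mn.IH(2) by blast
      then show False using b(1) by blast
    qed
  qed
qed

datatype ex = V nat | C nat | Add ex ex | Mul ex ex | Sub ex ex | Sum ex ex | Prd ex ex | Rec ex ex ex

primrec sem :: "ex \<Rightarrow> nat list \<Rightarrow> nat" where
  "sem (V i) env = env ! i"
| "sem (C n) env = n"
| "sem (Add a b) env = sem a env + sem b env"
| "sem (Mul a b) env = sem a env * sem b env"
| "sem (Sub a b) env = sem a env - sem b env"
| "sem (Sum b e) env = (\<Sum>y<sem b env. sem e (y # env))"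
| "sem (Prd b e) env = (\<Prod>y<sem b env. sem e (y # env))"
| "sem (Rec n b s) env = rec_nat (sem b env) (\<lambda>j r. sem s (r # j # env)) (sem n env)"

primrec cl :: "ex \<Rightarrow> nat \<Rightarrow> bool" where
  "cl (V i) k = (i < k)"
| "cl (C n) k = True"
| "cl (Add a b) k = (cl a k \<and> cl b k)"
| "cl (Mul a b) k = (cl a k \<and> cl b k)"
| "cl (Sub a b) k = (cl a k \<and> cl b k)"
| "cl (Sum b e) k = (cl b k \<and> cl e (Suc k))"
| "cl (Prd b e) k = (cl b k \<and> cl e (Suc k))"
| "cl (Rec n b s) k = (cl n k \<and> cl b k \<and> cl s (Suc (Suc k)))"

primrec cst :: "nat \<Rightarrow> recf" where
  "cst 0 = Zero"
| "cst (Suc n) = Comp Succ [cst n]"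

lemma eval_cst: "eval (cst n) xs n"
proof (induction n)
  case 0 then show ?case by (simp add: eval.zero)
next
  case (Suc n)
  show ?case unfolding cst.simps by (rule eval.comp[where ys="[n]"]) (use Suc in \<open>auto intro: eval.succ\<close>)
qed

lemma eval_primrec:
  assumes "eval f xs (r 0)" "\<And>j. eval g (r j # j # xs) (r (Suc j))"
  shows "eval (PrimRec f g) (n # xs) (r n)"
  by (induction n) (auto intro: eval.pr0 eval.prS assms)

lemma eval_comp2:
  assumes "eval g1 xs a" "eval g2 xs b" "eval f [a, b] z"
  shows "eval (Comp f [g1, g2]) xs z"
  by (rule eval.comp[where ys="[a,b]"]) (use assms in \<open>auto simp: less_Suc_eq nth_Cons'\<close>)

lemma eval_comp1:
  assumes "eval g1 xs a" "eval f [a] z"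
  shows "eval (Comp f [g1]) xs z"
  by (rule eval.comp[where ys="[a]"]) (use assms in \<open>auto\<close>)

lemma eval_comp_projs:
  assumes "\<forall>i\<in>set idx. i < length xs" "eval f (map (nth xs) idx) z"
  shows "eval (Comp f (map Proj idx)) xs z"
  by (rule eval.comp[where ys="map (nth xs) idx"]) (use assms in \<open>auto intro: eval.proj\<close>)

lemma eval_comp_cons_projs:
  assumes "\<forall>i\<in>set idx. i < length xs" "eval g xs a" "eval f (a # map (nth xs) idx) z"
  shows "eval (Comp f (g # map Proj idx)) xs z"
  by (rule eval.comp[where ys="a # map (nth xs) idx"]) (use assms in \<open>auto intro: eval.proj simp: nth_Cons'\<close>)

definition ADD :: recf where "ADD = PrimRec (Proj 0) (Comp Succ [Proj 0])"
definition MUL :: recf where "MUL = PrimRec Zero (Comp ADD [Proj 0, Proj 2])"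
definition PRED :: recf where "PRED = PrimRec Zero (Proj 1)"
definition SUBr :: recf where "SUBr = PrimRec (Proj 0) (Comp PRED [Proj 0])"

lemma eval_ADD: "eval ADD [x, y] (x + y)"
proof -
  have "eval (PrimRec (Proj 0) (Comp Succ [Proj 0])) (x # [y]) ((\<lambda>x. x + y) x)"
  proof (rule eval_primrec)
    show "eval (Proj 0) [y] (0 + y)" using eval.proj[of 0 "[y]"] by simp
    show "eval (Comp Succ [Proj 0]) ((j + y) # j # [y]) (Suc j + y)" for j
      by (rule eval_comp1[OF eval.proj]) (auto intro: eval.succ[of _ "[]", simplified])
  qed
  then show ?thesis by (simp add: ADD_def)
qed

lemma eval_MUL: "eval MUL [x, y] (x * y)"
proof -
  have "eval (PrimRec Zero (Comp ADD [Proj 0, Proj 2])) (x # [y]) ((\<lambda>x. x * y) x)"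
  proof (rule eval_primrec)
    show "eval Zero [y] (0 * y)" using eval.zero by simp
    show "eval (Comp ADD [Proj 0, Proj 2]) ((j * y) # j # [y]) (Suc j * y)" for j
      using eval_comp2[OF eval.proj eval.proj eval_ADD, of 0 "(j * y) # j # [y]" 2]
      by (simp add: add.commute)
  qed
  then show ?thesis by (simp add: MUL_def)
qed

lemma eval_PRED: "eval PRED [x] (x - 1)"
proof -
  have "eval (PrimRec Zero (Proj 1)) (x # []) ((\<lambda>x. x - 1) x)"
  proof (rule eval_primrec)
    show "eval Zero [] (0 - 1)" using eval.zero by simp
    show "eval (Proj 1) ((j - 1) # j # []) (Suc j - 1)" for j
      using eval.proj[of 1 "(j - 1) # j # []"] by simp
  qed
  then show ?thesis by (simp add: PRED_def)
qed

lemma eval_SUBr: "eval SUBr [y, x] (x - y)"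
proof -
  have "eval (PrimRec (Proj 0) (Comp PRED [Proj 0])) (y # [x]) ((\<lambda>y. x - y) y)"
  proof (rule eval_primrec)
    show "eval (Proj 0) [x] (x - 0)" using eval.proj[of 0 "[x]"] by simp
    show "eval (Comp PRED [Proj 0]) ((x - j) # j # [x]) (x - Suc j)" for j
      using eval_comp1[OF eval.proj eval_PRED, of 0 "(x - j) # j # [x]"] by simp
  qed
  then show ?thesis by (simp add: SUBr_def)
qed

primrec cmp :: "nat \<Rightarrow> ex \<Rightarrow> recf" where
  "cmp k (V i) = Proj i"
| "cmp k (C n) = cst n"
| "cmp k (Add a b) = Comp ADD [cmp k a, cmp k b]"
| "cmp k (Mul a b) = Comp MUL [cmp k a, cmp k b]"
| "cmp k (Sub a b) = Comp SUBr [cmp k b, cmp k a]"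
| "cmp k (Sum b e) = Comp (PrimRec Zero (Comp ADD [Proj 0, Comp (cmp (Suc k) e) (map Proj (map Suc [0..<Suc k]))]))
      (cmp k b # map Proj [0..<k])"
| "cmp k (Prd b e) = Comp (PrimRec (cst 1) (Comp MUL [Proj 0, Comp (cmp (Suc k) e) (map Proj (map Suc [0..<Suc k]))]))
      (cmp k b # map Proj [0..<k])"
| "cmp k (Rec n b s) = Comp (PrimRec (cmp k b) (cmp (Suc (Suc k)) s)) (cmp k n # map Proj [0..<k])"

lemma map_nth_upt: "length xs = k \<Longrightarrow> map (nth xs) [0..<k] = xs"
  by (metis map_nth)

lemma map_nth_upt2: "length env = k \<Longrightarrow> map (nth (a # j # env)) (map Suc [0..<Suc k]) = j # env"
proof -
  assume "length env = k"
  then have "length (j # env) = Suc k" by simp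
  then have "map (nth (j # env)) [0..<Suc k] = j # env" by (rule map_nth_upt)
  then show ?thesis by (simp add: o_def del: upt_Suc)
qed

lemma cmp_correct: "cl e k \<Longrightarrow> length env = k \<Longrightarrow> eval (cmp k e) env (sem e env)"
proof (induction e arbitrary: k env)
  case (V i) then show ?case by (auto intro: eval.proj)
next
  case (C n) then show ?case by (auto intro: eval_cst)
next
  case (Add a b) then show ?case by simp (rule eval_comp2[OF _ _ eval_ADD]; auto)
next
  case (Mul a b) then show ?case by simp (rule eval_comp2[OF _ _ eval_MUL]; auto)
next
  case (Sub a b) then show ?case by simp (rule eval_comp2[OF _ _ eval_SUBr]; auto)
next
  case (Sum b e)
  have step: "eval (Comp ADD [Proj 0, Comp (cmp (Suc k) e) (map Proj (map Suc [0..<Suc k]))])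
      (r # j # env) (r + sem e (j # env))" for r j
  proof (rule eval_comp2[OF _ _ eval_ADD])
    show "eval (Proj 0) (r # j # env) r" using eval.proj[of 0 "r#j#env"] by simp
    show "eval (Comp (cmp (Suc k) e) (map Proj (map Suc [0..<Suc k]))) (r # j # env) (sem e (j # env))"
    proof (rule eval_comp_projs)
      show "\<forall>i\<in>set (map Suc [0..<Suc k]). i < length (r # j # env)" using Sum.prems by (auto simp del: upt_Suc)
      have eq: "map (nth (r # j # env)) (map Suc [0..<Suc k]) = j # env" by (rule map_nth_upt2) (use Sum.prems in simp)
      show "eval (cmp (Suc k) e) (map (nth (r # j # env)) (map Suc [0..<Suc k])) (sem e (j # env))"
        unfolding eq by (rule Sum.IH(2)) (use Sum.prems in auto)
    qed
  qed
  have "eval (PrimRec Zero (Comp ADD [Proj 0, Comp (cmp (Suc k) e) (map Proj (map Suc [0..<Suc k]))]))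
     (sem b env # env) ((\<lambda>n. \<Sum>y<n. sem e (y # env)) (sem b env))"
  proof (rule eval_primrec)
    show "eval Zero env (\<Sum>y<0. sem e (y # env))" using eval.zero by simp
    show "eval (Comp ADD [Proj 0, Comp (cmp (Suc k) e) (map Proj (map Suc [0..<Suc k]))])
      ((\<Sum>y<j. sem e (y # env)) # j # env) (\<Sum>y<Suc j. sem e (y # env))" for j
      using step[of "\<Sum>y<j. sem e (y # env)" j] by simp
  qed
  then show ?case
    by (simp del: upt_Suc) (rule eval_comp_cons_projs; use Sum in \<open>simp add: map_nth_upt del: upt_Suc\<close>)
next
  case (Prd b e)
  have step: "eval (Comp MUL [Proj 0, Comp (cmp (Suc k) e) (map Proj (map Suc [0..<Suc k]))])
      (r # j # env) (r * sem e (j # env))" for r j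
  proof (rule eval_comp2[OF _ _ eval_MUL])
    show "eval (Proj 0) (r # j # env) r" using eval.proj[of 0 "r#j#env"] by simp
    show "eval (Comp (cmp (Suc k) e) (map Proj (map Suc [0..<Suc k]))) (r # j # env) (sem e (j # env))"
    proof (rule eval_comp_projs)
      show "\<forall>i\<in>set (map Suc [0..<Suc k]). i < length (r # j # env)" using Prd.prems by (auto simp del: upt_Suc)
      have eq: "map (nth (r # j # env)) (map Suc [0..<Suc k]) = j # env" by (rule map_nth_upt2) (use Prd.prems in simp)
      show "eval (cmp (Suc k) e) (map (nth (r # j # env)) (map Suc [0..<Suc k])) (sem e (j # env))"
        unfolding eq by (rule Prd.IH(2)) (use Prd.prems in auto)
    qed
  qed
  have "eval (PrimRec (cst 1) (Comp MUL [Proj 0, Comp (cmp (Suc k) e) (map Proj (map Suc [0..<Suc k]))]))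
     (sem b env # env) ((\<lambda>n. \<Prod>y<n. sem e (y # env)) (sem b env))"
  proof (rule eval_primrec)
    show "eval (cst 1) env (\<Prod>y<0. sem e (y # env))" using eval_cst[of 1] by simp
    show "eval (Comp MUL [Proj 0, Comp (cmp (Suc k) e) (map Proj (map Suc [0..<Suc k]))])
      ((\<Prod>y<j. sem e (y # env)) # j # env) (\<Prod>y<Suc j. sem e (y # env))" for j
      using step[of "\<Prod>y<j. sem e (y # env)" j] by simp
  qed
  then show ?case
    by (simp del: upt_Suc) (rule eval_comp_cons_projs; use Prd in \<open>simp add: map_nth_upt del: upt_Suc\<close>)
next
  case (Rec n b s)
  have "eval (PrimRec (cmp k b) (cmp (Suc (Suc k)) s))
     (sem n env # env) (rec_nat (sem b env) (\<lambda>j r. sem s (r # j # env)) (sem n env))"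
    by (rule eval_primrec) (use Rec in auto)
  then show ?case
    by (simp del: upt_Suc) (rule eval_comp_cons_projs; use Rec in \<open>simp add: map_nth_upt del: upt_Suc\<close>)
qed


lemma re_from_ex:
  assumes "cl e 2" "\<And>n. n \<in> A \<longleftrightarrow> (\<exists>m. sem e [m, n] = 0)"
  shows "rec_enum A"
proof -
  let ?f = "cmp 2 e"
  have cor: "eval ?f [m, n] (sem e [m, n])" for m n using cmp_correct[OF assms(1)] by simp
  have det: "eval ?f [m, n] v \<longleftrightarrow> v = sem e [m, n]" for m n v using cor eval_det by blast
  have "n \<in> A \<longleftrightarrow> (\<exists>y. eval (Minim ?f) [n] y)" for n
  proof
    assume "n \<in> A"
    then have ex: "\<exists>m. sem e [m, n] = 0" using assms(2) by blast
    define m where "m = (LEAST m. sem e [m, n] = 0)"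
    have m0: "sem e [m, n] = 0" using LeastI_ex[OF ex] m_def by simp
    have "\<forall>m'<m. \<exists>y. eval ?f [m', n] (Suc y)"
    proof (intro allI impI)
      fix m' assume "m' < m"
      then have "sem e [m', n] \<noteq> 0" using not_less_Least m_def by blast
      then obtain y where "sem e [m', n] = Suc y" using not0_implies_Suc by blast
      then show "\<exists>y. eval ?f [m', n] (Suc y)" using det by metis
    qed
    then have "eval (Minim ?f) [n] m" using m0 det by (intro eval.mn) auto
    then show "\<exists>y. eval (Minim ?f) [n] y" by blast
  next
    assume "\<exists>y. eval (Minim ?f) [n] y"
    then obtain y where "eval (Minim ?f) [n] y" by blast
    then have "eval ?f [y, n] 0" by (auto elim: MinimE)
    then have "sem e [y, n] = 0" using det by metis
    then show "n \<in> A" using assms(2) by blast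
  qed
  then show ?thesis unfolding rec_enum_def by blast
qed


primrec liftc :: "nat \<Rightarrow> ex \<Rightarrow> ex" where
  "liftc c (V i) = (if i < c then V i else V (Suc i))"
| "liftc c (C n) = C n"
| "liftc c (Add a b) = Add (liftc c a) (liftc c b)"
| "liftc c (Mul a b) = Mul (liftc c a) (liftc c b)"
| "liftc c (Sub a b) = Sub (liftc c a) (liftc c b)"
| "liftc c (Sum b e) = Sum (liftc c b) (liftc (Suc c) e)"
| "liftc c (Prd b e) = Prd (liftc c b) (liftc (Suc c) e)"
| "liftc c (Rec n b s) = Rec (liftc c n) (liftc c b) (liftc (Suc (Suc c)) s)"

lemma sem_liftc: "c \<le> length env \<Longrightarrow> sem (liftc c e) (take c env @ y # drop c env) = sem e env"
proof (induction e arbitrary: c env)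
  case (V i)
  show ?case
  proof (cases "i < c")
    case True then show ?thesis using V by (simp add: nth_append)
  next
    case False
    then have "Suc i - c = Suc (i - c)" by simp
    then show ?thesis using V False by (simp add: nth_append nth_drop)
  qed
next
  case (Sum b e)
  have "sem (liftc (Suc c) e) (take (Suc c) (x # env) @ y # drop (Suc c) (x # env)) = sem e (x # env)" for x
    using Sum.IH(2)[of "Suc c" "x # env"] Sum.prems by simp
  then show ?case using Sum by simp
next
  case (Prd b e)
  have "sem (liftc (Suc c) e) (take (Suc c) (x # env) @ y # drop (Suc c) (x # env)) = sem e (x # env)" for x
    using Prd.IH(2)[of "Suc c" "x # env"] Prd.prems by simp
  then show ?case using Prd by simp
next
  case (Rec n b s)
  have "sem (liftc (Suc (Suc c)) s) (take (Suc (Suc c)) (r # j # env) @ y # drop (Suc (Suc c)) (r # j # env))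
     = sem s (r # j # env)" for r j
    using Rec.IH(3)[of "Suc (Suc c)" "r # j # env"] Rec.prems by simp
  then show ?case using Rec by simp
qed auto

lemma cl_liftc: "c \<le> k \<Longrightarrow> cl (liftc c e) (Suc k) = cl e k"
  by (induction e arbitrary: c k) auto

definition lift :: "ex \<Rightarrow> ex" where "lift e = liftc 0 e"

lemma sem_lift[simp]: "sem (lift e) (y # env) = sem e env"
  using sem_liftc[of 0 env e y] by (simp add: lift_def)

lemma cl_lift[simp]: "cl (lift e) (Suc k) = cl e k"
  by (auto simp: lift_def cl_liftc)

lemma cl_lift_num[simp]: "cl (lift e) (numeral w) = cl e (pred_numeral w)"
  by (simp add: numeral_eq_Suc)


definition "sgE a = Sub (C 1) (Sub (C 1) a)"
definition "nsgE a = Sub (C 1) a"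
definition "leE a b = nsgE (Sub a b)"
definition "ltE a b = nsgE (Sub (Add a (C 1)) b)"
definition "eqE a b = nsgE (Add (Sub a b) (Sub b a))"
definition "andE a b = Mul a b"
definition "orE a b = sgE (Add a b)"
definition "allE b e = Prd b e"
definition "exE b e = sgE (Sum b e)"

lemma sem_sgE[simp]: "sem (sgE a) env = (if sem a env = 0 then 0 else 1)"
  by (simp add: sgE_def)
lemma sem_nsgE[simp]: "sem (nsgE a) env = (if sem a env = 0 then 1 else 0)"
  by (simp add: nsgE_def)
lemma sem_leE[simp]: "sem (leE a b) env = (if sem a env \<le> sem b env then 1 else 0)"
  by (simp add: leE_def)
lemma sem_ltE[simp]: "sem (ltE a b) env = (if sem a env < sem b env then 1 else 0)"
  by (simp add: ltE_def)
lemma sem_eqE[simp]: "sem (eqE a b) env = (if sem a env = sem b env then 1 else 0)"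
  by (simp add: eqE_def)
lemma sem_andE[simp]: "sem (andE a b) env = sem a env * sem b env"
  by (simp add: andE_def)
lemma sem_orE[simp]: "sem (orE a b) env = (if sem a env + sem b env = 0 then 0 else 1)"
  by (simp add: orE_def)
lemma sem_allE[simp]: "sem (allE b e) env = (\<Prod>y<sem b env. sem e (y # env))"
  by (simp add: allE_def)
lemma sem_exE[simp]: "sem (exE b e) env = (if (\<Sum>y<sem b env. sem e (y # env)) = 0 then 0 else 1)"
  by (simp add: exE_def)

lemma cl_macros[simp]:
  "cl (sgE a) k = cl a k" "cl (nsgE a) k = cl a k" "cl (leE a b) k = (cl a k \<and> cl b k)"
  "cl (ltE a b) k = (cl a k \<and> cl b k)" "cl (eqE a b) k = (cl a k \<and> cl b k)"
  "cl (andE a b) k = (cl a k \<and> cl b k)" "cl (orE a b) k = (cl a k \<and> cl b k)"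
  "cl (allE a b) k = (cl a k \<and> cl b (Suc k))" "cl (exE a b) k = (cl a k \<and> cl b (Suc k))"
  by (auto simp: sgE_def nsgE_def leE_def ltE_def eqE_def andE_def orE_def allE_def exE_def)

lemma b01_mult[simp]: "(if P then 1 else 0) * (if Q then 1 else 0) = (if P \<and> Q then 1 else (0::nat))"
  by auto
lemma b01_add0[simp]: "((if P then 1 else 0) + (if Q then 1 else 0) = (0::nat)) = (\<not> P \<and> \<not> Q)"
  by auto
lemma b01_eq0[simp]: "((if P then 1 else 0) = (0::nat)) = (\<not> P)"
  by auto
lemma prod_b01[simp]: "(\<Prod>y<(n::nat). if P y then 1 else 0) = (if \<forall>y<n. P y then 1 else (0::nat))"
  by (induction n) (auto simp: less_Suc_eq)
lemma sum_b01_eq0[simp]: "((\<Sum>y<(n::nat). if P y then 1 else 0) = (0::nat)) = (\<forall>y<n. \<not> P y)"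
  by auto

definition "pe2 x y = Add (Mul (Add x y) (Add (Add x y) (C 1))) (Mul (C 2) x)"
definition "fstE a = Sum (Add a (C 1)) (Sum (Add (lift a) (C 1))
   (Mul (V 1) (eqE (pe2 (V 1) (V 0)) (Mul (C 2) (lift (lift a))))))"
definition "sndE a = Sum (Add a (C 1)) (Sum (Add (lift a) (C 1))
   (Mul (V 0) (eqE (pe2 (V 1) (V 0)) (Mul (C 2) (lift (lift a))))))"

lemma pe_iff: "((x + y) * (x + y + 1) + 2 * x = 2 * A) \<longleftrightarrow> prod_decode A = (x, y)"
proof -
  have t: "2 * triangle n = n * (n + 1)" for n
    by (induction n) (auto simp: algebra_simps)
  have "prod_decode A = (x, y) \<longleftrightarrow> A = prod_encode (x, y)"
    by (metis prod_decode_inverse prod_encode_inverse)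
  also have "\<dots> \<longleftrightarrow> 2 * A = 2 * prod_encode (x, y)" by simp
  also have "2 * prod_encode (x, y) = (x + y) * (x + y + 1) + 2 * x"
    using t[of "x + y"] by (simp add: prod_encode_def algebra_simps)
  finally show ?thesis by auto
qed

lemma prod_decode_le: "fst (prod_decode A) \<le> A" "snd (prod_decode A) \<le> A"
  by (metis le_prod_encode_1 prod.collapse prod_decode_inverse)
     (metis le_prod_encode_2 prod.collapse prod_decode_inverse)

lemma double_sum_delta:
  fixes g :: "nat \<Rightarrow> nat \<Rightarrow> nat"
  assumes "x0 < B" "y0 < B"
  shows "(\<Sum>x<B. \<Sum>y<B. g x y * (if (x0, y0) = (x, y) then 1 else 0)) = g x0 y0"
proof -
  have "(\<Sum>x<B. \<Sum>y<B. g x y * (if (x0, y0) = (x, y) then 1 else 0))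
      = (\<Sum>x<B. if x = x0 then g x0 y0 else 0)"
  proof (rule sum.cong[OF refl])
    fix x assume "x \<in> {..<B}"
    have "(\<Sum>y<B. g x y * (if (x0, y0) = (x, y) then 1 else 0)) = (\<Sum>y<B. if y = y0 then (if x = x0 then g x y else 0) else 0)"
      by (rule sum.cong) auto
    also have "\<dots> = (if x = x0 then g x0 y0 else 0)" using assms by (simp add: sum.delta)
    finally show "(\<Sum>y<B. g x y * (if (x0, y0) = (x, y) then 1 else 0)) = (if x = x0 then g x0 y0 else 0)" .
  qed
  also have "\<dots> = g x0 y0" using assms by (simp add: sum.delta)
  finally show ?thesis .
qed

lemma sem_fstE[simp]: "sem (fstE a) env = fst (prod_decode (sem a env))"
proof -
  let ?A = "sem a env"
  obtain x0 y0 where d: "prod_decode ?A = (x0, y0)" by (cases "prod_decode ?A")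
  have b: "x0 < ?A + 1" "y0 < ?A + 1" using prod_decode_le[of ?A] d by auto
  have "sem (fstE a) env = (\<Sum>x<?A + 1. \<Sum>y<?A + 1. x * (if (x0, y0) = (x, y) then 1 else 0))"
    by (simp add: fstE_def pe2_def pe_iff[simplified] d)
  also have "\<dots> = x0" using double_sum_delta[OF b, of "\<lambda>x y. x"] by simp
  finally show ?thesis using d by simp
qed

lemma sem_sndE[simp]: "sem (sndE a) env = snd (prod_decode (sem a env))"
proof -
  let ?A = "sem a env"
  obtain x0 y0 where d: "prod_decode ?A = (x0, y0)" by (cases "prod_decode ?A")
  have b: "x0 < ?A + 1" "y0 < ?A + 1" using prod_decode_le[of ?A] d by auto
  have "sem (sndE a) env = (\<Sum>x<?A + 1. \<Sum>y<?A + 1. y * (if (x0, y0) = (x, y) then 1 else 0))"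
    by (simp add: sndE_def pe2_def pe_iff[simplified] d)
  also have "\<dots> = y0" using double_sum_delta[OF b, of "\<lambda>x y. y"] by simp
  finally show ?thesis using d by simp
qed


lemma half_sum: "(\<Sum>z<(B::nat). z * (if 2 * z = v then 1 else 0)) = (if even v \<and> v div 2 < B then v div 2 else 0)"
proof -
  have "(\<Sum>z<B. z * (if 2 * z = v then 1 else 0)) = (\<Sum>z<B. if even v \<and> v div 2 = z then v div 2 else 0)"
    by (rule sum.cong) auto
  also have "\<dots> = (if even v \<and> v div 2 < B then v div 2 else 0)" by (cases "even v") (auto simp: sum.delta)
  finally show ?thesis .
qed

definition "posd c = (if even c then c div 2 else (0::nat))"
definition "negd c = (if even c then 0 else (c + 1) div (2::nat))"

definition "posE c = Sum (Add c (C 1)) (Mul (V 0) (eqE (Mul (C 2) (V 0)) (lift c)))"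
definition "negE c = Sum (Add c (C 1)) (Mul (V 0) (eqE (Mul (C 2) (V 0)) (Add (lift c) (C 1))))"

lemma sem_posE[simp]: "sem (posE c) env = posd (sem c env)"
  by (simp add: posE_def posd_def half_sum)

lemma sem_negE[simp]: "sem (negE c) env = negd (sem c env)"
  by (simp add: negE_def negd_def half_sum)

lemma int_decode_posd_negd: "int_decode c = int (posd c) - int (negd c)"
  by (auto simp: int_decode_def sum_decode_def posd_def negd_def)

definition "tlc x = snd (prod_decode (x - 1))"
definition "itc c i = (tlc ^^ i) c"
definition "nthc c i = fst (prod_decode (itc c i - 1))"
definition "lenc c = (\<Sum>i<c. if itc c i = 0 then 0 else (1::nat))"

definition "tlE a = sndE (Sub a (C 1))"
definition "itE c i = Rec i c (tlE (V 0))"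
definition "nthE c i = fstE (Sub (itE c i) (C 1))"
definition "lenE c = Sum c (sgE (itE (lift c) (V 0)))"

lemma rec_nat_funpow: "rec_nat x (\<lambda>j r. f r) n = (f ^^ n) x"
  by (induction n) auto

lemma sem_itE[simp]: "sem (itE c i) env = itc (sem c env) (sem i env)"
proof -
  have "sem (itE c i) env = rec_nat (sem c env) (\<lambda>j r. tlc r) (sem i env)"
    by (simp add: itE_def tlE_def tlc_def)
  then show ?thesis by (simp add: rec_nat_funpow itc_def)
qed

lemma sem_nthE[simp]: "sem (nthE c i) env = nthc (sem c env) (sem i env)"
  by (simp add: nthE_def nthc_def)

lemma sem_lenE[simp]: "sem (lenE c) env = lenc (sem c env)"
  by (simp add: lenE_def lenc_def)

lemma prod_decode_0[simp]: "prod_decode 0 = (0, 0)"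
  using prod_encode_inverse[of "(0,0)"] by (simp add: prod_encode_def)

lemma tlc_list: "tlc (list_encode ys) = list_encode (tl ys)"
  by (cases ys) (auto simp: tlc_def)

lemma itc_list: "itc (list_encode xs) i = list_encode (drop i xs)"
  by (induction i) (auto simp: itc_def tlc_list drop_Suc tl_drop)

lemma nthc_list: "i < length xs \<Longrightarrow> nthc (list_encode xs) i = xs ! i"
  by (simp add: nthc_def itc_list Cons_nth_drop_Suc[symmetric])

lemma length_le_list_encode: "length xs \<le> list_encode xs"
  by (induction xs) (auto intro: le_trans[OF _ le_prod_encode_2])

lemma sum_ind_min: "(\<Sum>i<(c::nat). if i < L then 1 else (0::nat)) = min c L"
  by (induction c) auto

lemma list_encode_0_iff[simp]: "(list_encode ys = 0) = (ys = [])"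
  by (cases ys) auto

lemma lenc_list: "lenc (list_encode xs) = length xs"
proof -
  have "lenc (list_encode xs) = (\<Sum>i<list_encode xs. if i < length xs then 1 else 0)"
    unfolding lenc_def itc_list by (rule sum.cong) auto
  then show ?thesis using length_le_list_encode[of xs] by (simp add: sum_ind_min)
qed

definition "divE a b = Mul (sgE b) (Sum a (leE (Mul (Add (V 0) (C 1)) (lift b)) (lift a)))"
definition "modE a b = Sub a (Mul b (divE a b))"
definition "powE a i = Prd i (lift a)"
definition "dvE x a = exE (Add a (C 1)) (eqE (Mul (lift x) (V 0)) (lift a))"
definition "copE a b = allE (Add b (C 1)) (nsgE (andE (leE (C 2) (V 0)) (andE (dvE (V 0) (lift a)) (dvE (V 0) (lift b)))))"

lemma sem_divE[simp]: "sem (divE a b) env = sem a env div sem b env"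
proof (cases "sem b env = 0")
  case True then show ?thesis by (simp add: divE_def)
next
  case False
  let ?a = "sem a env" and ?b = "sem b env"
  have "(\<Sum>z<?a. if (z + 1) * ?b \<le> ?a then 1 else (0::nat)) = (\<Sum>z<?a. if z < ?a div ?b then 1 else 0)"
  proof (intro sum.cong refl)
    fix z
    have "((z + 1) * ?b \<le> ?a) = (Suc z \<le> ?a div ?b)"
      using less_eq_div_iff_mult_less_eq[of ?b "Suc z" ?a] False by simp
    then show "(if (z + 1) * ?b \<le> ?a then 1 else (0::nat)) = (if z < ?a div ?b then 1 else 0)"
      by (simp add: Suc_le_eq)
  qed
  also have "\<dots> = ?a div ?b" using div_le_dividend[of ?a ?b] by (simp add: sum_ind_min min_absorb2)
  finally show ?thesis using False by (simp add: divE_def)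
qed

lemma sem_modE[simp]: "sem (modE a b) env = sem a env mod sem b env"
  by (simp add: modE_def minus_div_mult_eq_mod[symmetric] mult.commute)

lemma sem_powE[simp]: "sem (powE a i) env = sem a env ^ sem i env"
  by (simp add: powE_def)

lemma dvd_bounded: "(\<exists>y<(a::nat) + 1. x * y = a) \<longleftrightarrow> x dvd a"
proof
  assume "x dvd a"
  then obtain y where y: "a = x * y" by blast
  show "\<exists>y<a + 1. x * y = a"
  proof (cases "a = 0")
    case True then show ?thesis by auto
  next
    case False then have "x > 0" using y by auto
    then obtain x' where "x = Suc x'" using gr0_implies_Suc by blast
    then have "y < a + 1" using y by simp
    then show ?thesis using y by blast
  qed
qed auto

lemma sum_b01_eq0': "((\<Sum>y<(n::nat). if P y then 1 else 0) = (0::nat)) = (\<not> (\<exists>y<n. P y))"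
  by auto

lemma sem_dvE[simp]: "sem (dvE x a) env = (if sem x env dvd sem a env then 1 else 0)"
proof -
  have e: "sem (dvE x a) env = (if (\<Sum>y<sem a env + 1. if sem x env * y = sem a env then 1 else 0) = (0::nat) then 0 else 1)"
    by (simp only: dvE_def sem_exE sem_eqE sem_lift sem.simps nth_Cons_0)
  show ?thesis unfolding e sum_b01_eq0' dvd_bounded by simp
qed

lemma cop_iff: "0 < (b::nat) \<Longrightarrow> (\<forall>x<b + 1. \<not> (2 \<le> x \<and> x dvd a \<and> x dvd b)) \<longleftrightarrow> coprime a b"
proof
  assume b: "0 < b" and h: "\<forall>x<b + 1. \<not> (2 \<le> x \<and> x dvd a \<and> x dvd b)"
  have "gcd a b \<le> b" using b by (simp add: dvd_imp_le)
  moreover have "gcd a b \<noteq> 0" using b by simp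
  moreover have "\<not> 2 \<le> gcd a b" using h[rule_format, of "gcd a b"] calculation(1) by auto
  ultimately have "gcd a b = 1" by linarith
  then show "coprime a b" by (simp add: coprime_iff_gcd_eq_1)
next
  assume "0 < b" "coprime a b"
  then show "\<forall>x<b + 1. \<not> (2 \<le> x \<and> x dvd a \<and> x dvd b)"
    by (auto dest: coprime_common_divisor_nat)
qed

lemma sem_copE[simp]: "sem (copE a b) env = (if \<forall>x<sem b env + 1. \<not> (2 \<le> x \<and> x dvd sem a env \<and> x dvd sem b env) then 1 else 0)"
  by (simp add: copE_def)

lemma cl_macros2[simp]:
  "cl (fstE a) k = cl a k" "cl (sndE a) k = cl a k" "cl (posE a) k = cl a k" "cl (negE a) k = cl a k"
  "cl (itE a b) k = (cl a k \<and> cl b k)" "cl (nthE a b) k = (cl a k \<and> cl b k)" "cl (lenE a) k = cl a k"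
  "cl (divE a b) k = (cl a k \<and> cl b k)" "cl (modE a b) k = (cl a k \<and> cl b k)"
  "cl (powE a b) k = (cl a k \<and> cl b k)" "cl (dvE a b) k = (cl a k \<and> cl b k)" "cl (copE a b) k = (cl a k \<and> cl b k)"
  by (auto simp: fstE_def sndE_def pe2_def posE_def negE_def itE_def tlE_def nthE_def lenE_def divE_def modE_def
     powE_def dvE_def copE_def)


definition "elemD W j = sndE (nthE W j)"
definition "elemP W j = posE (fstE (nthE W j))"
definition "elemN W j = negE (fstE (nthE W j))"

lemma cl_elem[simp]: "cl (elemD W j) k = (cl W k \<and> cl j k)" "cl (elemP W j) k = (cl W k \<and> cl j k)"
  "cl (elemN W j) k = (cl W k \<and> cl j k)"
  by (auto simp: elemD_def elemP_def elemN_def)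

abbreviation "pd \<equiv> prod_decode"

lemma sem_elem[simp]: "sem (elemD W j) env = snd (pd (nthc (sem W env) (sem j env)))"
  "sem (elemP W j) env = posd (fst (pd (nthc (sem W env) (sem j env))))"
  "sem (elemN W j) env = negd (fst (pd (nthc (sem W env) (sem j env))))"
  by (auto simp: elemD_def elemP_def elemN_def)

definition "lift2 e = lift (lift e)"

lemma sem_lift2[simp]: "sem (lift2 e) (a # b # env) = sem e env" by (simp add: lift2_def)
lemma cl_lift2[simp]: "cl (lift2 e) (Suc (Suc k)) = cl e k" by (simp add: lift2_def)

definition badE :: "ex \<Rightarrow> ex \<Rightarrow> ex \<Rightarrow> ex \<Rightarrow> ex \<Rightarrow> ex \<Rightarrow> ex \<Rightarrow> ex \<Rightarrow> ex \<Rightarrow> ex \<Rightarrow> ex" where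
  "badE p q s tp tn W k N D K =
    (let u = modE (divE (V 1) (powE (lift2 k) (V 0))) (lift2 k);
         pw = Mul (powE (lift2 p) (V 0)) (powE (lift2 q) (Sub (lift2 N) (V 0)));
         sN = Sum (lift N) (Mul (Mul (elemN (lift2 W) u) (divE (lift2 D) (elemD (lift2 W) u))) pw);
         sP = Sum (lift N) (Mul (Mul (elemP (lift2 W) u) (divE (lift2 D) (elemD (lift2 W) u))) pw);
         Xp = Add (Mul (Mul (lift tp) (divE (lift D) (lift s))) (powE (lift q) (lift N))) sN;
         Xn = Add (Mul (Mul (lift tn) (divE (lift D) (lift s))) (powE (lift q) (lift N))) sP;
         R = Mul (Mul (powE (lift p) (lift N)) (lift K)) (lift q);
         g = Sub (lift q) (lift p)
     in allE (powE k N) (orE (ltE (Add (Mul Xn g) R) (Mul Xp g)) (ltE (Add (Mul Xp g) R) (Mul Xn g))))"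

definition chkE :: ex where
  "chkE =
    (let n = V 1; m = V 0;
         L = fstE n; Rn = sndE n; TT = fstE Rn; W = sndE Rn;
         p = posE (fstE L); q = sndE L; it = fstE TT; s = sndE TT; tp = posE it; tn = negE it;
         k = lenE W; N = fstE m; D = fstE (sndE m); K = sndE (sndE m);
         V1 = andE (andE (ltE (C 0) p) (ltE p q)) (copE p q);
         V3 = andE (ltE (C 0) s) (copE (Add tp tn) s);
         V4 = allE k (andE (ltE (C 0) (elemD (lift W) (V 0)))
                (copE (Add (elemP (lift W) (V 0)) (elemN (lift W) (V 0))) (elemD (lift W) (V 0))));
         W1 = andE (ltE (C 0) D) (andE (dvE s D) (allE k (dvE (elemD (lift W) (V 0)) (lift D))));
         W2 = allE k (leE (Mul (Add (elemP (lift W) (V 0)) (elemN (lift W) (V 0)))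
                (divE (lift D) (elemD (lift W) (V 0)))) (lift K))
     in nsgE (andE V1 (andE V3 (andE V4 (andE W1 (andE W2 (badE p q s tp tn W k N D K)))))))"

definition "cop a b = (\<forall>x<b + 1. \<not> (2 \<le> x \<and> x dvd a \<and> (x::nat) dvd b))"

definition chk :: "nat \<Rightarrow> nat \<Rightarrow> bool" where
  "chk m n =
    (let L = fst (pd n); R = snd (pd n); TT = fst (pd R); W = snd (pd R);
         p = posd (fst (pd L)); q = snd (pd L); it = fst (pd TT); s = snd (pd TT);
         tp = posd it; tn = negd it; k = lenc W;
         N = fst (pd m); D = fst (pd (snd (pd m))); K = snd (pd (snd (pd m)));
         dd = (\<lambda>j. snd (pd (nthc W j))); ap = (\<lambda>j. posd (fst (pd (nthc W j))));
         an = (\<lambda>j. negd (fst (pd (nthc W j))))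
     in 0 < p \<and> p < q \<and> cop p q \<and> 0 < s \<and> cop (tp + tn) s \<and>
        (\<forall>j<k. 0 < dd j \<and> cop (ap j + an j) (dd j)) \<and>
        0 < D \<and> s dvd D \<and> (\<forall>j<k. dd j dvd D) \<and> (\<forall>j<k. (ap j + an j) * (D div dd j) \<le> K) \<and>
        (\<forall>x<k ^ N.
          let u = (\<lambda>i. x div k ^ i mod k);
              Xp = tp * (D div s) * q ^ N + (\<Sum>i<N. an (u i) * (D div dd (u i)) * (p ^ i * q ^ (N - i)));
              Xn = tn * (D div s) * q ^ N + (\<Sum>i<N. ap (u i) * (D div dd (u i)) * (p ^ i * q ^ (N - i)));
              R = p ^ N * K * q
          in Xn * (q - p) + R < Xp * (q - p) \<or> Xp * (q - p) + R < Xn * (q - p)))"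

lemma cl_chkE: "cl chkE 2"
  by (simp add: chkE_def badE_def Let_def lift2_def)

lemma sem_chkE: "sem chkE [m, n] = (if chk m n then 0 else 1)"
  by (simp add: chkE_def badE_def chk_def cop_def Let_def)


definition Sp :: "real \<Rightarrow> (nat \<Rightarrow> rat) \<Rightarrow> nat \<Rightarrow> real" where
  "Sp lam u N = (\<Sum>i<N. real_of_rat (u i) * lam ^ i)"

definition good :: "real \<Rightarrow> real \<Rightarrow> rat list \<Rightarrow> real \<Rightarrow> nat \<Rightarrow> (nat \<Rightarrow> rat) \<Rightarrow> bool" where
  "good lam t ws B N u \<longleftrightarrow> (\<forall>i<N. u i \<in> set ws) \<and> \<bar>t - Sp lam u N\<bar> \<le> lam ^ N * B"

lemma Sp_cong: "(\<And>i. i < N \<Longrightarrow> u i = v i) \<Longrightarrow> Sp lam u N = Sp lam v N"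
  unfolding Sp_def by (rule sum.cong) auto

lemma good_cong: "(\<And>i. i < N \<Longrightarrow> u i = v i) \<Longrightarrow> good lam t ws B N u = good lam t ws B N v"
  unfolding good_def using Sp_cong[of N u v lam] by auto

locale gsetting =
  fixes lam :: real and t :: real and ws :: "rat list" and B :: real
  assumes lam0: "0 < lam" and lam1: "lam < 1"
    and bnd: "\<forall>a\<in>set ws. \<bar>real_of_rat a\<bar> \<le> B * (1 - lam)"
begin

lemma good_Suc: "good lam t ws B (Suc N) u \<Longrightarrow> good lam t ws B N u"
proof -
  assume g: "good lam t ws B (Suc N) u"
  then have uN: "u N \<in> set ws" and all: "\<forall>i<N. u i \<in> set ws" unfolding good_def by auto
  have "\<bar>real_of_rat (u N)\<bar> \<le> B * (1 - lam)" using bnd uN by auto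
  then have a: "\<bar>real_of_rat (u N) * lam ^ N\<bar> \<le> B * (1 - lam) * lam ^ N"
    using lam0 by (simp add: abs_mult mult_right_mono)
  have "Sp lam u (Suc N) = Sp lam u N + real_of_rat (u N) * lam ^ N" by (simp add: Sp_def)
  then have "\<bar>t - Sp lam u N\<bar> \<le> \<bar>t - Sp lam u (Suc N)\<bar> + \<bar>real_of_rat (u N) * lam ^ N\<bar>" by linarith
  also have "\<dots> \<le> lam ^ Suc N * B + B * (1 - lam) * lam ^ N" using g a unfolding good_def by linarith
  also have "\<dots> = lam ^ N * B" by (simp add: algebra_simps)
  finally show ?thesis using all unfolding good_def by auto
qed

lemma good_mono: "good lam t ws B N u \<Longrightarrow> M \<le> N \<Longrightarrow> good lam t ws B M u"
proof (induction N)
  case 0 then show ?case by simp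
next
  case (Suc N) then show ?case using good_Suc by (cases "M = Suc N") auto
qed

lemma sol_good:
  assumes w: "\<forall>i. w i \<in> set ws" and s: "(\<lambda>i. real_of_rat (w i) * lam ^ i) sums t"
  shows "good lam t ws B N w"
proof -
  let ?f = "\<lambda>i. real_of_rat (w i) * lam ^ i"
  have tail: "(\<lambda>i. ?f (i + N)) sums (t - Sp lam w N)"
    using sums_split_initial_segment[OF s, of N] by (simp add: Sp_def)
  let ?g = "\<lambda>i. B * (1 - lam) * lam ^ N * lam ^ i"
  have geo: "(\<lambda>i. lam ^ i) sums (1 / (1 - lam))" using geometric_sums[of lam] lam0 lam1 by simp
  have gs: "?g sums (B * (1 - lam) * lam ^ N * (1 / (1 - lam)))" by (rule sums_mult[OF geo])
  have gval: "B * (1 - lam) * lam ^ N * (1 / (1 - lam)) = lam ^ N * B" using lam1 by (simp add: field_simps)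
  have fb: "\<bar>?f (i + N)\<bar> \<le> ?g i" for i
  proof -
    have "\<bar>real_of_rat (w (i + N))\<bar> \<le> B * (1 - lam)" using bnd w by auto
    then have "\<bar>real_of_rat (w (i + N))\<bar> * lam ^ (i + N) \<le> B * (1 - lam) * lam ^ (i + N)"
      using lam0 by (intro mult_right_mono) auto
    then show ?thesis using lam0 by (simp add: abs_mult power_add algebra_simps)
  qed
  have "t - Sp lam w N \<le> lam ^ N * B"
    using sums_le[OF _ tail gs] fb gval by (metis abs_le_D1)
  moreover have "-(t - Sp lam w N) \<le> lam ^ N * B"
    using sums_le[OF _ sums_minus[OF tail] gs] fb gval by (metis abs_le_D2)
  ultimately have "\<bar>t - Sp lam w N\<bar> \<le> lam ^ N * B" by linarith
  then show ?thesis using w unfolding good_def by auto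
qed

definition ext :: "(nat \<Rightarrow> rat) \<Rightarrow> nat \<Rightarrow> bool" where
  "ext v M \<longleftrightarrow> (\<forall>N\<ge>M. \<exists>u. good lam t ws B N u \<and> (\<forall>i<M. u i = v i))"

lemma ext_step:
  assumes e: "ext v M"
  shows "\<exists>a\<in>set ws. ext (v(M := a)) (Suc M)"
proof (rule ccontr)
  assume "\<not> ?thesis"
  then have "\<forall>a\<in>set ws. \<exists>N\<ge>Suc M. \<forall>u. good lam t ws B N u \<longrightarrow> \<not> (\<forall>i<Suc M. u i = (v(M := a)) i)"
    unfolding ext_def by blast
  then obtain Nf where Nf: "\<forall>a\<in>set ws. Nf a \<ge> Suc M \<and> (\<forall>u. good lam t ws B (Nf a) u \<longrightarrow> \<not> (\<forall>i<Suc M. u i = (v(M := a)) i))"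
    by metis
  define N where "N = Max (insert (Suc M) (Nf ` set ws))"
  have NM: "N \<ge> Suc M" unfolding N_def by simp
  have Na: "a \<in> set ws \<Longrightarrow> Nf a \<le> N" for a unfolding N_def by simp
  obtain u where u: "good lam t ws B N u" "\<forall>i<M. u i = v i" using e NM unfolding ext_def by (meson Suc_leD)
  have uM: "u M \<in> set ws" using u(1) NM unfolding good_def by auto
  have "good lam t ws B (Nf (u M)) u" using good_mono[OF u(1) Na[OF uM]] .
  moreover have "\<forall>i<Suc M. u i = (v(M := u M)) i" using u(2) by (auto simp: less_Suc_eq)
  ultimately show False using Nf uM by blast
qed

lemma koenig:
  assumes all: "\<forall>N. \<exists>u. good lam t ws B N u"
  shows "\<exists>w. (\<forall>i. w i \<in> set ws) \<and> (\<forall>N. good lam t ws B N w)"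
proof -
  define nxt where "nxt v M = (SOME a. a \<in> set ws \<and> ext (v(M := a)) (Suc M))" for v M
  define vs where "vs = rec_nat (\<lambda>_. 0) (\<lambda>M v. v(M := nxt v M))"
  have vs0: "vs 0 = (\<lambda>_. 0)" and vsS: "vs (Suc M) = (vs M)(M := nxt (vs M) M)" for M
    unfolding vs_def by simp_all
  have inv: "ext (vs M) M" for M
  proof (induction M)
    case 0 then show ?case using all unfolding ext_def by simp
  next
    case (Suc M)
    from ext_step[OF Suc] have "\<exists>a. a \<in> set ws \<and> ext ((vs M)(M := a)) (Suc M)" by blast
    then have "nxt (vs M) M \<in> set ws \<and> ext ((vs M)(M := nxt (vs M) M)) (Suc M)"
      unfolding nxt_def by (rule someI_ex)
    then show ?case unfolding vsS by blast
  qed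
  have inset: "nxt (vs M) M \<in> set ws" for M
  proof -
    from ext_step[OF inv[of M]] have "\<exists>a. a \<in> set ws \<and> ext ((vs M)(M := a)) (Suc M)" by blast
    then show ?thesis unfolding nxt_def by (rule someI_ex[THEN conjunct1])
  qed
  define w where "w i = vs (Suc i) i" for i
  have stab: "vs (Suc i + d) i = w i" for i d
    by (induction d) (auto simp: w_def vsS)
  have wv: "i < M \<Longrightarrow> vs M i = w i" for i M
    using stab[of i "M - Suc i"] by simp
  have "\<forall>i. w i \<in> set ws" using inset by (simp add: w_def vsS)
  moreover have "good lam t ws B N w" for N
  proof -
    obtain u where "good lam t ws B N u" "\<forall>i<N. u i = vs N i" using inv[of N] unfolding ext_def by blast
    then show ?thesis using good_cong[of N u w] wv by auto
  qed
  ultimately show ?thesis by blast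
qed

lemma M1:
  "(\<exists>w. (\<forall>i. w i \<in> set ws) \<and> (\<lambda>i. real_of_rat (w i) * lam ^ i) sums t) \<longleftrightarrow> (\<forall>N. \<exists>u. good lam t ws B N u)"
proof
  assume "\<exists>w. (\<forall>i. w i \<in> set ws) \<and> (\<lambda>i. real_of_rat (w i) * lam ^ i) sums t"
  then show "\<forall>N. \<exists>u. good lam t ws B N u" using sol_good by blast
next
  assume "\<forall>N. \<exists>u. good lam t ws B N u"
  then obtain w where w: "\<forall>i. w i \<in> set ws" "\<forall>N. good lam t ws B N w" using koenig by blast
  have lim0: "(\<lambda>N. lam ^ N * B) \<longlonglongrightarrow> 0"
    using LIMSEQ_power_zero[of lam] lam0 lam1 by (auto intro: tendsto_mult_left_zero)
  have "(\<lambda>N. Sp lam w N - t) \<longlonglongrightarrow> 0"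
  proof (rule tendsto_0_le[OF lim0, where K=1])
    have "norm (Sp lam w N - t) \<le> norm (lam ^ N * B) * 1" for N
    proof -
      have "\<bar>t - Sp lam w N\<bar> \<le> lam ^ N * B" using w(2) unfolding good_def by blast
      then show ?thesis using abs_ge_self[of "lam ^ N * B"] by (simp add: abs_minus_commute)
    qed
    then show "\<forall>\<^sub>F N in sequentially. norm (Sp lam w N - t) \<le> norm (lam ^ N * B) * 1" by simp
  qed
  then have "(\<lambda>N. Sp lam w N) \<longlonglongrightarrow> t" by (simp add: LIM_zero_iff)
  then have "(\<lambda>i. real_of_rat (w i) * lam ^ i) sums t" unfolding sums_def Sp_def by simp
  then show "\<exists>w. (\<forall>i. w i \<in> set ws) \<and> (\<lambda>i. real_of_rat (w i) * lam ^ i) sums t" using w by blast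
qed

end


definition "num r = fst (quotient_of r)"
definition "den r = snd (quotient_of r)"

lemma den_pos: "0 < den r" by (simp add: den_def quotient_of_denom_pos')
lemma num_den_coprime: "coprime (num r) (den r)"
  by (simp add: num_def den_def quotient_of_coprime)
lemma rat_num_den: "r = of_int (num r) / of_int (den r)"
  by (simp add: num_def den_def quotient_of_div)
lemma real_num_den: "real_of_rat r = of_int (num r) / of_int (den r)"
  by (subst rat_num_den) (simp add: of_rat_divide)

lemma enc_rat_parts: "fst (pd (encode_rat r)) = int_encode (num r)" "snd (pd (encode_rat r)) = nat (den r)"
  by (simp_all add: encode_rat_def num_def den_def)

lemma posd_int_encode: "posd (int_encode a) = (if 0 \<le> a then nat a else 0)"
  by (auto simp: int_encode_def sum_encode_def posd_def)
lemma negd_int_encode: "negd (int_encode a) = (if 0 \<le> a then 0 else nat (- a))"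
  by (auto simp: int_encode_def sum_encode_def negd_def)

lemma posd_negd0: "posd c * negd c = 0"
  by (simp add: posd_def negd_def)

lemma abs_int_decode: "nat \<bar>int_decode i\<bar> = posd i + negd i"
  using int_decode_posd_negd[of i] posd_negd0[of i] by auto

definition "ratok c \<longleftrightarrow> 0 < snd (pd c) \<and> cop (posd (fst (pd c)) + negd (fst (pd c))) (snd (pd c))"
definition "decr c = Fract (int_decode (fst (pd c))) (int (snd (pd c)))"

lemma cop_coprime: "0 < b \<Longrightarrow> cop a b \<longleftrightarrow> coprime a b"
  unfolding cop_def by (rule cop_iff)

lemma ratok_enc: "ratok c \<Longrightarrow> encode_rat (decr c) = c"
proof -
  assume ok: "ratok c"
  let ?i = "fst (pd c)" and ?d = "snd (pd c)"
  have d: "0 < ?d" using ok by (simp add: ratok_def)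
  have "coprime (nat \<bar>int_decode ?i\<bar>) ?d"
    using ok d by (simp add: ratok_def cop_coprime abs_int_decode)
  then have cp: "coprime (int_decode ?i) (int ?d)" by simp
  have "quotient_of (decr c) = (int_decode ?i, int ?d)"
    using cp d by (simp add: decr_def quotient_of_Fract)
  then show ?thesis by (simp add: encode_rat_def)
qed

lemma enc_ratok: "ratok (encode_rat r)"
proof -
  have "0 < nat (den r)" using den_pos[of r] by simp
  moreover have "coprime (nat \<bar>num r\<bar>) (nat (den r))"
    using num_den_coprime[of r] den_pos[of r] by simp
  ultimately show ?thesis
    unfolding ratok_def enc_rat_parts by (simp add: cop_coprime abs_int_decode[symmetric])
qed

lemma enc_inst_parts:
  assumes "n = encode_instance lam t ws"
  shows "fst (pd n) = encode_rat lam" "fst (pd (snd (pd n))) = encode_rat t"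
    "snd (pd (snd (pd n))) = list_encode (map encode_rat ws)"
  using assms by (simp_all add: encode_instance_def)

definition core :: "nat \<Rightarrow> nat \<Rightarrow> nat \<Rightarrow> nat \<Rightarrow> nat \<Rightarrow> nat \<Rightarrow> (nat \<Rightarrow> nat) \<Rightarrow> (nat \<Rightarrow> nat) \<Rightarrow> (nat \<Rightarrow> nat)
   \<Rightarrow> nat \<Rightarrow> nat \<Rightarrow> nat \<Rightarrow> bool" where
  "core p q s tp tn k dd ap an N D K \<longleftrightarrow>
     0 < D \<and> s dvd D \<and> (\<forall>j<k. dd j dvd D) \<and> (\<forall>j<k. (ap j + an j) * (D div dd j) \<le> K) \<and>
        (\<forall>x<k ^ N.
          let u = (\<lambda>i. x div k ^ i mod k);
              Xp = tp * (D div s) * q ^ N + (\<Sum>i<N. an (u i) * (D div dd (u i)) * (p ^ i * q ^ (N - i)));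
              Xn = tn * (D div s) * q ^ N + (\<Sum>i<N. ap (u i) * (D div dd (u i)) * (p ^ i * q ^ (N - i)));
              R = p ^ N * K * q
          in Xn * (q - p) + R < Xp * (q - p) \<or> Xp * (q - p) + R < Xn * (q - p))"

definition valid :: "nat \<Rightarrow> nat \<Rightarrow> nat \<Rightarrow> nat \<Rightarrow> nat \<Rightarrow> nat \<Rightarrow> (nat \<Rightarrow> nat) \<Rightarrow> (nat \<Rightarrow> nat) \<Rightarrow> (nat \<Rightarrow> nat) \<Rightarrow> bool" where
  "valid p q s tp tn k dd ap an \<longleftrightarrow> 0 < p \<and> p < q \<and> cop p q \<and> 0 < s \<and> cop (tp + tn) s \<and>
        (\<forall>j<k. 0 < dd j \<and> cop (ap j + an j) (dd j))"

lemma chk_core: "chk m n =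
    (let L = fst (pd n); R = snd (pd n); TT = fst (pd R); W = snd (pd R);
         p = posd (fst (pd L)); q = snd (pd L); it = fst (pd TT); s = snd (pd TT);
         tp = posd it; tn = negd it; k = lenc W;
         dd = (\<lambda>j. snd (pd (nthc W j))); ap = (\<lambda>j. posd (fst (pd (nthc W j))));
         an = (\<lambda>j. negd (fst (pd (nthc W j))))
     in valid p q s tp tn k dd ap an \<and> core p q s tp tn k dd ap an (fst (pd m)) (fst (pd (snd (pd m)))) (snd (pd (snd (pd m)))))"
  unfolding chk_def core_def valid_def Let_def by simp

lemma digit_lt: "x < k ^ N \<Longrightarrow> i < N \<Longrightarrow> x div k ^ i mod k < (k::nat)"
  by (cases "k = 0") (auto simp: zero_power)

lemma core_cong:
  assumes "\<forall>j<k. dd j = dd' j \<and> ap j = ap' j \<and> an j = an' j"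
  shows "core p q s tp tn k dd ap an N D K = core p q s tp tn k dd' ap' an' N D K"
proof -
  have e: "(\<Sum>i<N. f (x div k ^ i mod k) * (D div g (x div k ^ i mod k)) * h i)
     = (\<Sum>i<N. f' (x div k ^ i mod k) * (D div g' (x div k ^ i mod k)) * h i)"
    if "x < k ^ N" "\<forall>j<k. f j = f' j \<and> g j = g' j" for x f f' g g' h
    by (rule sum.cong) (use that digit_lt[OF that(1)] in auto)
  show ?thesis unfolding core_def Let_def
    using assms e[of _ an an' dd dd'] e[of _ ap ap' dd dd'] by (auto simp del: upt_Suc)
qed

lemma valid_cong:
  assumes "\<forall>j<k. dd j = dd' j \<and> ap j = ap' j \<and> an j = an' j"
  shows "valid p q s tp tn k dd ap an = valid p q s tp tn k dd' ap' an'"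
  using assms unfolding valid_def by auto

definition "ddI ws j = nat (den (ws ! j))"
definition "apI ws j = posd (int_encode (num (ws ! j)))"
definition "anI ws j = negd (int_encode (num (ws ! j)))"

lemma chk_instance:
  "chk m (encode_instance lam t ws) \<longleftrightarrow>
     valid (posd (int_encode (num lam))) (nat (den lam)) (nat (den t)) (posd (int_encode (num t))) (negd (int_encode (num t)))
       (length ws) (ddI ws) (apI ws) (anI ws) \<and>
     core (posd (int_encode (num lam))) (nat (den lam)) (nat (den t)) (posd (int_encode (num t))) (negd (int_encode (num t)))
       (length ws) (ddI ws) (apI ws) (anI ws) (fst (pd m)) (fst (pd (snd (pd m)))) (snd (pd (snd (pd m))))"
proof -
  let ?W = "list_encode (map encode_rat ws)"
  have k: "lenc ?W = length ws" by (simp add: lenc_list)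
  have nth: "\<forall>j<length ws. snd (pd (nthc ?W j)) = ddI ws j \<and> posd (fst (pd (nthc ?W j))) = apI ws j
      \<and> negd (fst (pd (nthc ?W j))) = anI ws j"
    by (simp add: nthc_list enc_rat_parts ddI_def apI_def anI_def)
  show ?thesis
    unfolding chk_core Let_def enc_inst_parts[OF refl] enc_rat_parts k
    using core_cong[OF nth] valid_cong[OF nth] by simp
qed

lemma valid_instance:
  "valid (posd (int_encode (num lam))) (nat (den lam)) (nat (den t)) (posd (int_encode (num t))) (negd (int_encode (num t)))
       (length ws) (ddI ws) (apI ws) (anI ws) \<longleftrightarrow> 0 < lam \<and> lam < 1"
proof -
  have dl: "0 < den lam" by (rule den_pos)
  have okl: "ratok (encode_rat lam)" and okt: "ratok (encode_rat t)" by (rule enc_ratok)+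
  have okw: "ratok (encode_rat (ws ! j))" for j by (rule enc_ratok)
  have l0: "0 < lam \<longleftrightarrow> 0 < num lam"
    using dl by (subst rat_num_den) (simp add: zero_less_divide_iff)
  have l1: "lam < 1 \<longleftrightarrow> num lam < den lam"
    using dl by (subst rat_num_den) (simp add: divide_less_eq_1_pos)
  show ?thesis
  proof
    assume v: "valid (posd (int_encode (num lam))) (nat (den lam)) (nat (den t)) (posd (int_encode (num t))) (negd (int_encode (num t)))
       (length ws) (ddI ws) (apI ws) (anI ws)"
    then have "0 < posd (int_encode (num lam))" "posd (int_encode (num lam)) < nat (den lam)"
      unfolding valid_def by auto
    then show "0 < lam \<and> lam < 1" using l0 l1 by (auto simp: posd_int_encode split: if_splits)
  next
    assume "0 < lam \<and> lam < 1"
    then have a: "0 < num lam" "num lam < den lam" using l0 l1 by auto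
    show "valid (posd (int_encode (num lam))) (nat (den lam)) (nat (den t)) (posd (int_encode (num t))) (negd (int_encode (num t)))
       (length ws) (ddI ws) (apI ws) (anI ws)"
      using a okl okt okw unfolding valid_def ratok_def enc_rat_parts ddI_def apI_def anI_def
      by (simp add: posd_int_encode negd_int_encode)
  qed
qed

lemma nat_bad_iff:
  fixes A B c R :: nat
  shows "(B * c + R < A * c \<or> A * c + R < B * c) \<longleftrightarrow> real R < \<bar>real A - real B\<bar> * real c"
proof -
  have e1: "(B * c + R < A * c) \<longleftrightarrow> real B * real c + real R < real A * real c"
    by (metis of_nat_add of_nat_less_iff of_nat_mult)
  have e2: "(A * c + R < B * c) \<longleftrightarrow> real A * real c + real R < real B * real c"
    by (metis of_nat_add of_nat_less_iff of_nat_mult)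
  have c0: "0 \<le> real c" by simp
  show ?thesis
  proof (cases "B \<le> A")
    case True
    then have "\<bar>real A - real B\<bar> * real c = real A * real c - real B * real c" by (simp add: algebra_simps)
    moreover have "real B * real c \<le> real A * real c" using True c0 by (simp add: mult_right_mono)
    ultimately show ?thesis unfolding e1 e2 by linarith
  next
    case False
    then have "\<bar>real A - real B\<bar> * real c = real B * real c - real A * real c" by (simp add: algebra_simps)
    moreover have "real A * real c \<le> real B * real c" using False c0 by (simp add: mult_right_mono)
    ultimately show ?thesis unfolding e1 e2 by linarith
  qed
qed

lemma scale:
  fixes p q s D tp tn N :: nat and u dd ap an :: "nat \<Rightarrow> nat"
  assumes pq: "0 < p" "p < q" and s: "0 < s" "s dvd D" and dd: "\<forall>i<N. 0 < dd (u i) \<and> dd (u i) dvd D"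
  shows "real (tp * (D div s) * q ^ N + (\<Sum>i<N. an (u i) * (D div dd (u i)) * (p ^ i * q ^ (N - i))))
       - real (tn * (D div s) * q ^ N + (\<Sum>i<N. ap (u i) * (D div dd (u i)) * (p ^ i * q ^ (N - i))))
     = real D * real q ^ N * ((real tp - real tn) / real s
          - (\<Sum>i<N. (real (ap (u i)) - real (an (u i))) / real (dd (u i)) * (real p / real q) ^ i))"
proof -
  let ?lr = "real p / real q"
  have q0: "0 < real q" using pq by simp
  have pw: "real (p ^ i * q ^ (N - i)) = real q ^ N * ?lr ^ i" if "i < N" for i
  proof -
    have "real q ^ N = real q ^ i * real q ^ (N - i)" using that by (simp add: power_add[symmetric])
    then show ?thesis using q0 by (simp add: power_divide)
  qed
  have trm: "real (f (u i) * (D div dd (u i)) * (p ^ i * q ^ (N - i)))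
      = real D * real q ^ N * (real (f (u i)) / real (dd (u i)) * ?lr ^ i)" if "i < N" for i f
    using pw[OF that] dd that by (simp add: real_of_nat_div)
  have sn: "real (\<Sum>i<N. an (u i) * (D div dd (u i)) * (p ^ i * q ^ (N - i)))
      = real D * real q ^ N * (\<Sum>i<N. real (an (u i)) / real (dd (u i)) * ?lr ^ i)"
    by (simp only: of_nat_sum sum_distrib_left) (rule sum.cong[OF refl], rule trm, simp)
  have sp: "real (\<Sum>i<N. ap (u i) * (D div dd (u i)) * (p ^ i * q ^ (N - i)))
      = real D * real q ^ N * (\<Sum>i<N. real (ap (u i)) / real (dd (u i)) * ?lr ^ i)"
    by (simp only: of_nat_sum sum_distrib_left) (rule sum.cong[OF refl], rule trm, simp)
  have ts: "real (D div s) = real D / real s" using s by (simp add: real_of_nat_div)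
  have diff: "(\<Sum>i<N. (real (ap (u i)) - real (an (u i))) / real (dd (u i)) * ?lr ^ i)
      = (\<Sum>i<N. real (ap (u i)) / real (dd (u i)) * ?lr ^ i) - (\<Sum>i<N. real (an (u i)) / real (dd (u i)) * ?lr ^ i)"
    by (simp add: sum_subtractf[symmetric] diff_divide_distrib left_diff_distrib)
  show ?thesis
    unfolding of_nat_add sn sp diff using s
    by (simp add: ts field_simps)
qed

definition badx :: "nat \<Rightarrow> nat \<Rightarrow> nat \<Rightarrow> nat \<Rightarrow> nat \<Rightarrow> nat \<Rightarrow> (nat \<Rightarrow> nat) \<Rightarrow> (nat \<Rightarrow> nat) \<Rightarrow> (nat \<Rightarrow> nat)
   \<Rightarrow> nat \<Rightarrow> nat \<Rightarrow> nat \<Rightarrow> nat \<Rightarrow> bool" where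
  "badx p q s tp tn k dd ap an N D K x \<longleftrightarrow>
          (let u = (\<lambda>i. x div k ^ i mod k);
              Xp = tp * (D div s) * q ^ N + (\<Sum>i<N. an (u i) * (D div dd (u i)) * (p ^ i * q ^ (N - i)));
              Xn = tn * (D div s) * q ^ N + (\<Sum>i<N. ap (u i) * (D div dd (u i)) * (p ^ i * q ^ (N - i)));
              R = p ^ N * K * q
          in Xn * (q - p) + R < Xp * (q - p) \<or> Xp * (q - p) + R < Xn * (q - p))"

lemma core_alt: "core p q s tp tn k dd ap an N D K \<longleftrightarrow>
     0 < D \<and> s dvd D \<and> (\<forall>j<k. dd j dvd D) \<and> (\<forall>j<k. (ap j + an j) * (D div dd j) \<le> K) \<and>
        (\<forall>x<k ^ N. badx p q s tp tn k dd ap an N D K x)"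
  unfolding core_def badx_def ..

lemma bad_iff:
  fixes p q s D tp tn N K :: nat and u dd ap an :: "nat \<Rightarrow> nat"
  assumes pq: "0 < p" "p < q" and s: "0 < s" "s dvd D" and dd: "\<forall>i<N. 0 < dd (u i) \<and> dd (u i) dvd D"
  shows "((tn * (D div s) * q ^ N + (\<Sum>i<N. ap (u i) * (D div dd (u i)) * (p ^ i * q ^ (N - i)))) * (q - p) + p ^ N * K * q
          < (tp * (D div s) * q ^ N + (\<Sum>i<N. an (u i) * (D div dd (u i)) * (p ^ i * q ^ (N - i)))) * (q - p) \<or>
         (tp * (D div s) * q ^ N + (\<Sum>i<N. an (u i) * (D div dd (u i)) * (p ^ i * q ^ (N - i)))) * (q - p) + p ^ N * K * q
          < (tn * (D div s) * q ^ N + (\<Sum>i<N. ap (u i) * (D div dd (u i)) * (p ^ i * q ^ (N - i)))) * (q - p))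
     \<longleftrightarrow> (real p / real q) ^ N * real K < \<bar>(real tp - real tn) / real s
          - (\<Sum>i<N. (real (ap (u i)) - real (an (u i))) / real (dd (u i)) * (real p / real q) ^ i)\<bar>
          * (1 - real p / real q) * real D"
proof -
  let ?lr = "real p / real q"
  let ?Y = "(real tp - real tn) / real s - (\<Sum>i<N. (real (ap (u i)) - real (an (u i))) / real (dd (u i)) * ?lr ^ i)"
  have q0: "0 < real q" using pq by simp
  have e1: "real (p ^ N * K * q) = real q ^ Suc N * (?lr ^ N * real K)"
    using q0 by (simp add: power_divide field_simps)
  have e2': "\<bar>real D * real q ^ N * Y\<bar> * real (q - p) = real q ^ Suc N * (\<bar>Y\<bar> * (1 - ?lr) * real D)" for Y
    using pq q0 by (simp add: abs_mult of_nat_diff field_simps)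
  note e2 = e2'[of ?Y]
  have qq: "0 < real q ^ Suc N" using q0 by simp
  show ?thesis
    unfolding nat_bad_iff scale[where u=u and dd=dd and ap=ap and an=an, OF pq s dd] e1 e2 using qq by (rule mult_less_cancel_left_pos)
qed

fun encd :: "nat \<Rightarrow> (nat \<Rightarrow> nat) \<Rightarrow> nat \<Rightarrow> nat" where
  "encd k u 0 = 0"
| "encd k u (Suc N) = u 0 + k * encd k (\<lambda>i. u (Suc i)) N"

lemma encd_props: "\<forall>i<N. u i < k \<Longrightarrow> encd k u N < k ^ N \<and> (\<forall>i<N. encd k u N div k ^ i mod k = u i)"
proof (induction N arbitrary: u)
  case 0 then show ?case by simp
next
  case (Suc N)
  let ?u' = "\<lambda>i. u (Suc i)"
  have IH: "encd k ?u' N < k ^ N" "\<forall>i<N. encd k ?u' N div k ^ i mod k = u (Suc i)"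
    using Suc.IH[of ?u'] Suc.prems by auto
  have u0: "u 0 < k" using Suc.prems by auto
  let ?x = "encd k ?u' N"
  have "u 0 + k * ?x < k + k * ?x" using u0 by simp
  also have "\<dots> = k * (?x + 1)" by (simp add: algebra_simps)
  also have "\<dots> \<le> k * k ^ N" using IH(1) by (intro mult_le_mono2) simp
  finally have b: "encd k u (Suc N) < k ^ Suc N" by simp
  have dk: "(u 0 + k * ?x) div k = ?x" using u0 by simp
  have "encd k u (Suc N) div k ^ i mod k = u i" if "i < Suc N" for i
  proof (cases i)
    case 0 then show ?thesis using u0 by simp
  next
    case (Suc i')
    then have "encd k u (Suc N) div k ^ i = ?x div k ^ i'" using dk by (simp add: div_mult2_eq)
    then show ?thesis using IH(2) Suc that by simp
  qed
  then show ?case using b by blast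
qed

locale Einst =
  fixes lam t :: rat and ws :: "rat list"
  assumes lam0: "0 < lam" and lam1: "lam < 1"
begin

abbreviation "P \<equiv> posd (int_encode (num lam))"
abbreviation "Q \<equiv> nat (den lam)"
abbreviation "S \<equiv> nat (den t)"
abbreviation "TP \<equiv> posd (int_encode (num t))"
abbreviation "TN \<equiv> negd (int_encode (num t))"
abbreviation "k \<equiv> length ws"
abbreviation "lr \<equiv> real_of_rat lam"
abbreviation "tr \<equiv> real_of_rat t"

lemma num_lam_pos: "0 < num lam"
  using lam0 den_pos[of lam] by (subst (asm) rat_num_den) (simp add: zero_less_divide_iff)

lemma num_lam_less: "num lam < den lam"
  using lam1 den_pos[of lam] by (subst (asm) rat_num_den) (simp add: divide_less_eq_1_pos)

lemma F5: "0 < P" "P < Q"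
  using num_lam_pos num_lam_less by (auto simp: posd_int_encode)

lemma F1: "real P / real Q = lr"
proof -
  have "real P = of_int (num lam)" using num_lam_pos by (simp add: posd_int_encode)
  moreover have "real Q = of_int (den lam)" using den_pos[of lam] by simp
  ultimately show ?thesis by (simp add: real_num_den[of lam])
qed

lemma num_split: "num r = int (posd (int_encode (num r))) - int (negd (int_encode (num r)))"
  using int_decode_posd_negd[of "int_encode (num r)"] by simp

lemma real_split: "real_of_rat r = (real (posd (int_encode (num r))) - real (negd (int_encode (num r)))) / real (nat (den r))"
proof -
  have "of_int (num r) = (real (posd (int_encode (num r))) - real (negd (int_encode (num r))))"
    by (subst num_split) simp
  moreover have "real (nat (den r)) = of_int (den r)" using den_pos[of r] by simp
  ultimately show ?thesis by (simp add: real_num_den[of r])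
qed

lemma F2: "tr = (real TP - real TN) / real S" by (rule real_split)

lemma F3: "real_of_rat (ws ! j) = (real (apI ws j) - real (anI ws j)) / real (ddI ws j)"
  unfolding apI_def anI_def ddI_def by (rule real_split)

lemma F4: "0 < ddI ws j" using den_pos[of "ws ! j"] by (simp add: ddI_def)
lemma S0: "0 < S" using den_pos[of t] by simp

lemma F6:
  assumes "ddI ws j dvd D"
  shows "\<bar>real_of_rat (ws ! j)\<bar> * real D = real ((apI ws j + anI ws j) * (D div ddI ws j))"
proof -
  have z: "apI ws j * anI ws j = 0" unfolding apI_def anI_def by (rule posd_negd0)
  have "\<bar>real (apI ws j) - real (anI ws j)\<bar> = real (apI ws j) + real (anI ws j)"
    using z by auto
  moreover have "real (D div ddI ws j) = real D / real (ddI ws j)" using assms by (simp add: real_of_nat_div)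
  ultimately show ?thesis using F4[of j] unfolding F3 by (simp add: abs_div_pos)
qed

lemma E_bad:
  assumes W1: "0 < D" "S dvd D" "\<forall>j<k. ddI ws j dvd D" and x: "x < k ^ N"
  shows "badx P Q S TP TN k (ddI ws) (apI ws) (anI ws) N D K x \<longleftrightarrow>
     lr ^ N * real K < \<bar>tr - Sp lr (\<lambda>i. ws ! (x div k ^ i mod k)) N\<bar> * (1 - lr) * real D"
proof -
  let ?u = "\<lambda>i. x div k ^ i mod k"
  have ul: "\<forall>i<N. ?u i < k" using digit_lt[OF x] by blast
  have dd: "\<forall>i<N. 0 < ddI ws (?u i) \<and> ddI ws (?u i) dvd D" using ul W1 F4 by auto
  have sm: "(\<Sum>i<N. (real (apI ws (?u i)) - real (anI ws (?u i))) / real (ddI ws (?u i)) * lr ^ i)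
      = Sp lr (\<lambda>i. ws ! (x div k ^ i mod k)) N"
    unfolding Sp_def by (rule sum.cong) (auto simp: F3)
  show ?thesis
    unfolding badx_def Let_def bad_iff[where u="?u", OF F5 S0 W1(2) dd] F1 F2[symmetric] sm ..
qed

definition "Bd D K = real K / ((1 - lr) * real D)"

lemma lr01: "0 < lr" "lr < 1" using lam0 lam1 by auto

lemma E_sem:
  assumes W1: "0 < D" "S dvd D" "\<forall>j<k. ddI ws j dvd D"
    and W2: "\<forall>j<k. (apI ws j + anI ws j) * (D div ddI ws j) \<le> K"
  shows "gsetting lr ws (Bd D K)"
    and "(\<forall>x<k ^ N. badx P Q S TP TN k (ddI ws) (apI ws) (anI ws) N D K x)
          \<longleftrightarrow> \<not> (\<exists>u. good lr tr ws (Bd D K) N u)"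
proof -
  have c0: "0 < (1 - lr) * real D" using lr01 W1 by simp
  have gen: "\<And>x c::real. c \<noteq> 0 \<Longrightarrow> x / c * c = x" by simp
  have BK: "Bd D K * ((1 - lr) * real D) = real K" unfolding Bd_def by (rule gen) (use c0 in linarith)
  have key: "lr ^ N * Bd D K < y \<longleftrightarrow> lr ^ N * real K < y * (1 - lr) * real D" for y
  proof -
    have "lr ^ N * Bd D K < y \<longleftrightarrow> lr ^ N * Bd D K * ((1 - lr) * real D) < y * ((1 - lr) * real D)"
      by (rule mult_less_cancel_right_pos[OF c0, symmetric])
    also have "\<dots> \<longleftrightarrow> lr ^ N * real K < y * (1 - lr) * real D" using BK by (simp add: mult.assoc)
    finally show ?thesis .
  qed
  show "gsetting lr ws (Bd D K)"
    unfolding gsetting_def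
  proof (intro conjI ballI)
    show "0 < lr" "lr < 1" by (rule lr01)+
    fix a assume "a \<in> set ws"
    then obtain j where j: "j < k" "a = ws ! j" by (metis in_set_conv_nth)
    have "real ((apI ws j + anI ws j) * (D div ddI ws j)) \<le> real K" using W2 j(1) of_nat_le_iff by blast
    moreover have "\<bar>real_of_rat a\<bar> * real D = real ((apI ws j + anI ws j) * (D div ddI ws j))"
      using F6[of j D] W1(3) j by blast
    ultimately have "\<bar>real_of_rat a\<bar> * real D \<le> real K" by linarith
    moreover have "real K = Bd D K * (1 - lr) * real D" by (simp only: mult.assoc BK)
    ultimately have "\<bar>real_of_rat a\<bar> * real D \<le> Bd D K * (1 - lr) * real D" by linarith
    moreover have "0 < real D" using W1 by simp
    ultimately show "\<bar>real_of_rat a\<bar> \<le> Bd D K * (1 - lr)" by (rule mult_right_le_imp_le)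
  qed
  show "(\<forall>x<k ^ N. badx P Q S TP TN k (ddI ws) (apI ws) (anI ws) N D K x) \<longleftrightarrow> \<not> (\<exists>u. good lr tr ws (Bd D K) N u)"
  proof
    assume all: "\<forall>x<k ^ N. badx P Q S TP TN k (ddI ws) (apI ws) (anI ws) N D K x"
    show "\<not> (\<exists>u. good lr tr ws (Bd D K) N u)"
    proof
      assume "\<exists>u. good lr tr ws (Bd D K) N u"
      then obtain v where v: "good lr tr ws (Bd D K) N v" by blast
      define ui where "ui i = (SOME j. j < k \<and> ws ! j = v i)" for i
      have ui: "ui i < k \<and> ws ! ui i = v i" if "i < N" for i
      proof -
        have "v i \<in> set ws" using v that unfolding good_def by auto
        then have "\<exists>j. j < k \<and> ws ! j = v i" by (metis in_set_conv_nth)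
        then show ?thesis unfolding ui_def by (rule someI_ex)
      qed
      define x where "x = encd k ui N"
      have xp: "x < k ^ N" "\<forall>i<N. x div k ^ i mod k = ui i" using encd_props[of N ui k] ui unfolding x_def by auto
      have "badx P Q S TP TN k (ddI ws) (apI ws) (anI ws) N D K x" using all xp(1) by blast
      then have "lr ^ N * real K < \<bar>tr - Sp lr (\<lambda>i. ws ! (x div k ^ i mod k)) N\<bar> * (1 - lr) * real D"
        by (rule E_bad[where K=K, OF W1 xp(1), THEN iffD1])
      moreover have "Sp lr (\<lambda>i. ws ! (x div k ^ i mod k)) N = Sp lr v N"
        by (rule Sp_cong) (use xp ui in auto)
      ultimately have "lr ^ N * real K < \<bar>tr - Sp lr v N\<bar> * (1 - lr) * real D" by metis
      then have "lr ^ N * Bd D K < \<bar>tr - Sp lr v N\<bar>" by (rule key[THEN iffD2])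
      moreover have "\<bar>tr - Sp lr v N\<bar> \<le> lr ^ N * Bd D K" using v unfolding good_def by blast
      ultimately show False by linarith
    qed
  next
    assume ng: "\<not> (\<exists>u. good lr tr ws (Bd D K) N u)"
    show "\<forall>x<k ^ N. badx P Q S TP TN k (ddI ws) (apI ws) (anI ws) N D K x"
    proof (intro allI impI)
      fix x assume x: "x < k ^ N"
      let ?v = "\<lambda>i. ws ! (x div k ^ i mod k)"
      have "\<forall>i<N. ?v i \<in> set ws"
      proof (intro allI impI)
        fix i assume "i < N"
        show "?v i \<in> set ws" by (rule nth_mem) (rule digit_lt[OF x \<open>i < N\<close>])
      qed
      moreover have "\<not> good lr tr ws (Bd D K) N ?v" using ng by blast
      ultimately have "\<not> \<bar>tr - Sp lr ?v N\<bar> \<le> lr ^ N * Bd D K" unfolding good_def by blast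
      then have "lr ^ N * Bd D K < \<bar>tr - Sp lr ?v N\<bar>" by linarith
      then have "lr ^ N * real K < \<bar>tr - Sp lr ?v N\<bar> * (1 - lr) * real D" by (rule key[THEN iffD1])
      then show "badx P Q S TP TN k (ddI ws) (apI ws) (anI ws) N D K x"
        by (rule E_bad[where K=K, OF W1 x, THEN iffD2])
    qed
  qed
qed

lemma solvable_iff: "gtds_solvable lam t ws \<longleftrightarrow>
    (\<exists>w. (\<forall>i. w i \<in> set ws) \<and> (\<lambda>i. real_of_rat (w i) * lr ^ i) sums tr)"
  unfolding gtds_solvable_def gtds_solution_def ..

lemma E1:
  assumes "core P Q S TP TN k (ddI ws) (apI ws) (anI ws) N D K"
  shows "\<not> gtds_solvable lam t ws"
proof
  from assms have W1: "0 < D" "S dvd D" "\<forall>j<k. ddI ws j dvd D"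
    and W2: "\<forall>j<k. (apI ws j + anI ws j) * (D div ddI ws j) \<le> K"
    and W3: "\<forall>x<k ^ N. badx P Q S TP TN k (ddI ws) (apI ws) (anI ws) N D K x"
    unfolding core_alt by auto
  interpret g: gsetting lr tr ws "Bd D K" by (rule E_sem(1)[OF W1 W2])
  assume "gtds_solvable lam t ws"
  then have "\<forall>N. \<exists>u. good lr tr ws (Bd D K) N u" using g.M1 solvable_iff by blast
  then show False using W3 E_sem(2)[OF W1 W2, of N] by blast
qed

lemma E2:
  assumes "\<not> gtds_solvable lam t ws"
  shows "\<exists>N D K. core P Q S TP TN k (ddI ws) (apI ws) (anI ws) N D K"
proof -
  define D where "D = S * (\<Prod>j<k. ddI ws j)"
  define K where "K = (\<Sum>j<k. (apI ws j + anI ws j) * (D div ddI ws j))"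
  have W1a: "0 < D" unfolding D_def using S0 F4 by (simp add: prod_pos)
  have W1b: "S dvd D" unfolding D_def by simp
  have W1c: "\<forall>j<k. ddI ws j dvd D" unfolding D_def by (auto intro!: dvd_mult dvd_prodI)
  note W1 = W1a W1b W1c
  have W2: "\<forall>j<k. (apI ws j + anI ws j) * (D div ddI ws j) \<le> K"
    unfolding K_def by (auto intro: member_le_sum)
  interpret g: gsetting lr tr ws "Bd D K" by (rule E_sem(1)[OF W1 W2])
  have "\<not> (\<forall>N. \<exists>u. good lr tr ws (Bd D K) N u)" using assms g.M1 solvable_iff by blast
  then obtain N where "\<not> (\<exists>u. good lr tr ws (Bd D K) N u)" by blast
  then have "\<forall>x<k ^ N. badx P Q S TP TN k (ddI ws) (apI ws) (anI ws) N D K x"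
    using E_sem(2)[OF W1 W2, of N] by blast
  then show ?thesis using W1 W2 unfolding core_alt by blast
qed

end

lemma main_iff:
  "n \<in> {encode_instance lam t ws | lam t ws. gtds_instance lam \<and> \<not> gtds_solvable lam t ws} \<longleftrightarrow> (\<exists>m. chk m n)"
proof
  assume "n \<in> {encode_instance lam t ws | lam t ws. gtds_instance lam \<and> \<not> gtds_solvable lam t ws}"
  then obtain lam t ws where n: "n = encode_instance lam t ws" "0 < lam" "lam < 1" "\<not> gtds_solvable lam t ws"
    by (auto simp: gtds_instance_def)
  interpret Einst lam t ws using n by unfold_locales auto
  from E2[OF n(4)] obtain N D K where c: "core P Q S TP TN k (ddI ws) (apI ws) (anI ws) N D K" by blast
  let ?m = "prod_encode (N, prod_encode (D, K))"
  have "valid P Q S TP TN k (ddI ws) (apI ws) (anI ws)" using valid_instance n by blast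
  then have "chk ?m n" unfolding n(1) chk_instance using c by simp
  then show "\<exists>m. chk m n" by blast
next
  assume "\<exists>m. chk m n"
  then obtain m where c: "chk m n" by blast
  let ?L = "fst (pd n)" and ?TT = "fst (pd (snd (pd n)))" and ?W = "snd (pd (snd (pd n)))"
  have v: "valid (posd (fst (pd ?L))) (snd (pd ?L)) (snd (pd ?TT)) (posd (fst (pd ?TT))) (negd (fst (pd ?TT)))
      (lenc ?W) (\<lambda>j. snd (pd (nthc ?W j))) (\<lambda>j. posd (fst (pd (nthc ?W j)))) (\<lambda>j. negd (fst (pd (nthc ?W j))))"
    using c unfolding chk_core Let_def by blast
  define xs where "xs = list_decode ?W"
  have Wxs: "?W = list_encode xs" by (simp add: xs_def)
  have okL: "ratok ?L"
  proof -
    have p: "0 < posd (fst (pd ?L))" "posd (fst (pd ?L)) < snd (pd ?L)" "cop (posd (fst (pd ?L))) (snd (pd ?L))"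
      using v unfolding valid_def by auto
    have "negd (fst (pd ?L)) = 0" using p(1) posd_negd0[of "fst (pd ?L)"] by simp
    then show ?thesis using p unfolding ratok_def by simp
  qed
  have okT: "ratok ?TT" using v unfolding valid_def ratok_def by simp
  have okW: "\<forall>c\<in>set xs. ratok c"
  proof
    fix c assume "c \<in> set xs"
    then obtain j where j: "j < length xs" "c = xs ! j" by (metis in_set_conv_nth)
    have "j < lenc ?W" using j(1) by (simp add: Wxs lenc_list)
    then have "0 < snd (pd (nthc ?W j)) \<and> cop (posd (fst (pd (nthc ?W j))) + negd (fst (pd (nthc ?W j)))) (snd (pd (nthc ?W j)))"
      using v unfolding valid_def by blast
    moreover have "nthc ?W j = c" using j by (simp add: Wxs nthc_list)
    ultimately show "ratok c" unfolding ratok_def by simp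
  qed
  define lam where "lam = decr ?L"
  define t where "t = decr ?TT"
  define ws where "ws = map decr xs"
  have mw: "map encode_rat ws = xs"
    unfolding ws_def map_map using okW by (induction xs) (auto simp: ratok_enc)
  have "encode_instance lam t ws = prod_encode (?L, prod_encode (?TT, ?W))"
    unfolding encode_instance_def lam_def t_def ratok_enc[OF okL] ratok_enc[OF okT] mw Wxs ..
  also have "\<dots> = n" by simp
  finally have n_eq: "n = encode_instance lam t ws" by simp
  have c2: "chk m (encode_instance lam t ws)" using c n_eq by simp
  then have "0 < lam \<and> lam < 1" unfolding chk_instance valid_instance by blast
  then interpret Einst lam t ws by unfold_locales auto
  have "core P Q S TP TN k (ddI ws) (apI ws) (anI ws) (fst (pd m)) (fst (pd (snd (pd m)))) (snd (pd (snd (pd m))))"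
    using c2 unfolding chk_instance by blast
  then have "\<not> gtds_solvable lam t ws" by (rule E1)
  then show "n \<in> {encode_instance lam t ws | lam t ws. gtds_instance lam \<and> \<not> gtds_solvable lam t ws}"
    using n_eq \<open>0 < lam \<and> lam < 1\<close> by (auto simp: gtds_instance_def)
qed

theorem theorem21:
  shows "rec_enum {encode_instance lam t ws | lam t ws.
                     gtds_instance lam \<and> \<not> gtds_solvable lam t ws}"
proof (rule re_from_ex[OF cl_chkE])
  fix n
  show "n \<in> {encode_instance lam t ws | lam t ws. gtds_instance lam \<and> \<not> gtds_solvable lam t ws}
      \<longleftrightarrow> (\<exists>m. sem chkE [m, n] = 0)"
    unfolding main_iff sem_chkE by simp
qed


end
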